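(* (a) There are $2^{\mathfrak c}$ ultrafilters $x\in\beta\mathbb{N}$ that are not on finite levels, i.e. $x\notin\bigcup_{i=0}^\infty\overline{L_i}$. (b) There are $2^{\mathfrak c}$ ultrafilters that are irreducible in $\beta\mathbb{N}$ and not on finite levels. (c) $\bigcup_{i=0}^\infty\overline{L_i}\neq\overline{\bigcup_{i=0}^\infty L_i}$.
   Context: $\mathbb{N}=\{1,2,3,\dots\}$; $\beta\mathbb{N}$ is the set of ultrafilters on $\mathbb{N}$ (Stone–Čech compactification, naturals identified with principal ultrafilters), with multiplication: $A\in xy$ iff $\{n:A/n\in y\}\in x$, $A/n=\{m:mn\in A\}$. For $A\subseteq\mathbb{N}$, $\overline{A}=\{x\in\beta\mathbb{N}:A\in x\}$. $P$ is the set of primes, $L_0=\{1\}$, $L_n=\{a_1\cdots a_n:a_i\in P\}$. An ultrafilter is on a finite level if it lies in $\overline{L_i}$ for some $i\ge0$. $\mathfrak c=|\mathbb{R}|$. Irreducible: not of the form $yz$ with $y,z\in\beta\mathbb{N}\setminus\{1\}$. *)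

theory Defs
  imports Complex_Main "HOL-Library.Equipollence" "HOL-Computational_Algebra.Primes"
begin

definition Npos :: "nat set" where "Npos = {1..}"

definition is_uf :: "nat set set \<Rightarrow> bool" where
  "is_uf U \<longleftrightarrow> (\<forall>A\<in>U. A \<subseteq> Npos) \<and> Npos \<in> U \<and> {} \<notin> U
     \<and> (\<forall>A B. A \<in> U \<longrightarrow> B \<in> U \<longrightarrow> A \<inter> B \<in> U)
     \<and> (\<forall>A B. A \<in> U \<longrightarrow> A \<subseteq> B \<longrightarrow> B \<subseteq> Npos \<longrightarrow> B \<in> U)
     \<and> (\<forall>A. A \<subseteq> Npos \<longrightarrow> A \<in> U \<or> Npos - A \<in> U)"

definition betaN :: "nat set set set" where "betaN = {U. is_uf U}"

text \<open>Principal ultrafilter at n (naturals identified with principal ultrafilters).\<close>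
definition principal :: "nat \<Rightarrow> nat set set" where
  "principal n = {A. A \<subseteq> Npos \<and> n \<in> A}"

definition divset :: "nat set \<Rightarrow> nat \<Rightarrow> nat set" where
  "divset A n = {m \<in> Npos. m * n \<in> A}"

definition bmult :: "nat set set \<Rightarrow> nat set set \<Rightarrow> nat set set" where
  "bmult x y = {A. A \<subseteq> Npos \<and> {n \<in> Npos. divset A n \<in> y} \<in> x}"

definition clos :: "nat set \<Rightarrow> nat set set set" where
  "clos A = {x \<in> betaN. A \<in> x}"

definition L :: "nat \<Rightarrow> nat set" where
  "L n = {prod_list ps | ps. length ps = n \<and> (\<forall>p \<in> set ps. prime p)}"

definition beta_irreducible :: "nat set set \<Rightarrow> bool" where
  "beta_irreducible x \<longleftrightarrow> x \<in> betaN \<and>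
     \<not> (\<exists>y \<in> betaN - {principal 1}. \<exists>z \<in> betaN - {principal 1}. x = bmult y z)"

end

theory Submission
  imports Defs "HOL-Analysis.Abstract_Topology_2"
begin

definition fip :: "nat set set \<Rightarrow> bool" where
  "fip K \<longleftrightarrow> (\<forall>H. finite H \<and> H \<subseteq> K \<longrightarrow> Npos \<inter> \<Inter>H \<noteq> {})"

lemma fip_insert_iff:
  "fip (insert A M) \<longleftrightarrow> fip M \<and> (\<forall>H. finite H \<and> H \<subseteq> M \<longrightarrow> Npos \<inter> A \<inter> \<Inter>H \<noteq> {})"
proof
  assume a: "fip (insert A M)"
  show "fip M \<and> (\<forall>H. finite H \<and> H \<subseteq> M \<longrightarrow> Npos \<inter> A \<inter> \<Inter>H \<noteq> {})"
  proof (intro conjI allI impI)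
    show "fip M" using a unfolding fip_def by blast
    fix H assume "finite H \<and> H \<subseteq> M"
    then have "finite (insert A H) \<and> insert A H \<subseteq> insert A M" by auto
    then have "Npos \<inter> \<Inter>(insert A H) \<noteq> {}" using a unfolding fip_def by blast
    then show "Npos \<inter> A \<inter> \<Inter>H \<noteq> {}" by (simp add: Int_assoc)
  qed
next
  assume a: "fip M \<and> (\<forall>H. finite H \<and> H \<subseteq> M \<longrightarrow> Npos \<inter> A \<inter> \<Inter>H \<noteq> {})"
  show "fip (insert A M)" unfolding fip_def
  proof (intro allI impI)
    fix H assume h: "finite H \<and> H \<subseteq> insert A M"
    show "Npos \<inter> \<Inter>H \<noteq> {}"
    proof (cases "A \<in> H")
      case True
      have "finite (H - {A}) \<and> H - {A} \<subseteq> M" using h by auto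
      then have "Npos \<inter> A \<inter> \<Inter>(H - {A}) \<noteq> {}" using a by blast
      moreover have "\<Inter>H = A \<inter> \<Inter>(H - {A})" using True by blast
      ultimately show ?thesis by (simp add: Int_assoc)
    next
      case False
      then have "finite H \<and> H \<subseteq> M" using h by auto
      then show ?thesis using a unfolding fip_def by blast
    qed
  qed
qed

lemma uf_exists:
  assumes G: "G \<subseteq> Pow Npos" and fG: "fip G"
  shows "\<exists>U. is_uf U \<and> G \<subseteq> U"
proof -
  define \<A> where "\<A> = {K. G \<subseteq> K \<and> K \<subseteq> Pow Npos \<and> fip K}"
  have "\<exists>M\<in>\<A>. \<forall>X\<in>\<A>. M \<subseteq> X \<longrightarrow> X = M"
  proof (rule Zorn_Lemma2, intro ballI)
    fix C assume C: "C \<in> chains \<A>"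
    show "\<exists>U\<in>\<A>. \<forall>X\<in>C. X \<subseteq> U"
    proof (intro bexI)
      show "\<forall>X\<in>C. X \<subseteq> G \<union> \<Union>C" by blast
      have sub: "C \<subseteq> \<A>" and ch: "subset.chain \<A> C" using C by (auto simp: chains_alt_def subset.chain_def)
      have "fip (G \<union> \<Union>C)" unfolding fip_def
      proof (intro allI impI)
        fix H assume H: "finite H \<and> H \<subseteq> G \<union> \<Union>C"
        show "Npos \<inter> \<Inter>H \<noteq> {}"
        proof (cases "C = {}")
          case True
          then show ?thesis using H fG unfolding fip_def by auto
        next
          case False
          have "H \<subseteq> \<Union>C" using H False sub unfolding \<A>_def by blast
          then obtain B where "B \<in> C" "H \<subseteq> B"
            using finite_subset_Union_chain[OF _ _ False ch] H by metis
          then show ?thesis using H sub unfolding \<A>_def fip_def by blast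
        qed
      qed
      then show "G \<union> \<Union>C \<in> \<A>" using G C unfolding \<A>_def chains_def by auto
    qed
  qed
  then obtain M where MA: "M \<in> \<A>" and Mmax: "\<And>X. X \<in> \<A> \<Longrightarrow> M \<subseteq> X \<Longrightarrow> X = M" by blast
  have GM: "G \<subseteq> M" and MP: "M \<subseteq> Pow Npos" and fM: "fip M" using MA unfolding \<A>_def by auto
  have ins: "A \<in> M" if "A \<subseteq> Npos" "fip (insert A M)" for A
  proof -
    have "insert A M \<in> \<A>" using that GM MP unfolding \<A>_def by auto
    then have "insert A M = M" using Mmax by blast
    then show ?thesis by blast
  qed
  have "is_uf M" unfolding is_uf_def
  proof (intro conjI allI impI)
    show "\<forall>A\<in>M. A \<subseteq> Npos" using MP by blast
    show "Npos \<in> M"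
    proof (rule ins)
      show "fip (insert Npos M)" unfolding fip_insert_iff
      proof (intro conjI allI impI)
        show "fip M" by fact
        fix H assume "finite H \<and> H \<subseteq> M"
        then have "Npos \<inter> \<Inter>H \<noteq> {}" using fM unfolding fip_def by blast
        then show "Npos \<inter> Npos \<inter> \<Inter>H \<noteq> {}" by simp
      qed
    qed simp
    show "{} \<notin> M"
    proof
      assume "{} \<in> M"
      then have "Npos \<inter> \<Inter>{{}} \<noteq> {}" using fM[unfolded fip_def, rule_format, of "{{}}"] by simp
      then show False by simp
    qed
  next
    fix A B assume AB: "A \<in> M" "B \<in> M"
    show "A \<inter> B \<in> M"
    proof (rule ins)
      show "A \<inter> B \<subseteq> Npos" using AB MP by blast
      show "fip (insert (A \<inter> B) M)" unfolding fip_insert_iff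
      proof (intro conjI allI impI)
        show "fip M" by fact
        fix H assume "finite H \<and> H \<subseteq> M"
        then have "finite (insert A (insert B H)) \<and> insert A (insert B H) \<subseteq> M" using AB by auto
        then have "Npos \<inter> \<Inter>(insert A (insert B H)) \<noteq> {}" using fM unfolding fip_def by blast
        then show "Npos \<inter> (A \<inter> B) \<inter> \<Inter>H \<noteq> {}" by (simp add: Int_assoc)
      qed
    qed
  next
    fix A B assume AB: "A \<in> M" "A \<subseteq> B" "B \<subseteq> Npos"
    show "B \<in> M"
    proof (rule ins)
      show "B \<subseteq> Npos" by fact
      show "fip (insert B M)" unfolding fip_insert_iff
      proof (intro conjI allI impI)
        show "fip M" by fact
        fix H assume "finite H \<and> H \<subseteq> M"
        then have "finite (insert A H) \<and> insert A H \<subseteq> M" using AB by auto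
        then have "Npos \<inter> \<Inter>(insert A H) \<noteq> {}" using fM unfolding fip_def by blast
        then show "Npos \<inter> B \<inter> \<Inter>H \<noteq> {}" using AB by auto
      qed
    qed
  next
    fix A assume A: "A \<subseteq> Npos"
    show "A \<in> M \<or> Npos - A \<in> M"
    proof (rule ccontr)
      assume n: "\<not> (A \<in> M \<or> Npos - A \<in> M)"
      have "\<not> fip (insert A M)" using ins A n by blast
      then obtain H1 where H1: "finite H1" "H1 \<subseteq> M" "Npos \<inter> A \<inter> \<Inter>H1 = {}"
        using fM unfolding fip_insert_iff by blast
      have "\<not> fip (insert (Npos - A) M)" using ins A n by blast
      then obtain H2 where H2: "finite H2" "H2 \<subseteq> M" "Npos \<inter> (Npos - A) \<inter> \<Inter>H2 = {}"
        using fM unfolding fip_insert_iff by blast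
      have "finite (H1 \<union> H2) \<and> H1 \<union> H2 \<subseteq> M" using H1 H2 by auto
      then have "Npos \<inter> \<Inter>(H1 \<union> H2) \<noteq> {}" using fM unfolding fip_def by blast
      then obtain x where x: "x \<in> Npos" "\<And>S. S \<in> H1 \<Longrightarrow> x \<in> S" "\<And>S. S \<in> H2 \<Longrightarrow> x \<in> S" by blast
      show False
      proof (cases "x \<in> A")
        case True
        then have "x \<in> Npos \<inter> A \<inter> \<Inter>H1" using x by blast
        then show False using H1(3) by simp
      next
        case False
        then have "x \<in> Npos \<inter> (Npos - A) \<inter> \<Inter>H2" using x by blast
        then show False using H2(3) by simp
      qed
    qed
  qed
  then show ?thesis using GM by blast
qed


definition DD :: "(nat \<times> nat set set) set" where
  "DD = {(n, S). S \<subseteq> Pow {..<n}}"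

definition EE :: "nat set \<Rightarrow> (nat \<times> nat set set) set" where
  "EE X = {(n, S) \<in> DD. X \<inter> {..<n} \<in> S}"

lemma DD_countable: "countable DD"
proof -
  have "DD \<subseteq> (\<Union>n. {n} \<times> Pow (Pow {..<n}))" unfolding DD_def by auto
  moreover have "countable (\<Union>n::nat. {n} \<times> Pow (Pow {..<n}))"
    apply (rule countable_UN)
     apply (rule countableI_type)
    apply (rule countable_finite)
    apply simp
    done
  ultimately show ?thesis by (rule countable_subset)
qed

lemma restr_sep:
  fixes V :: "nat set set"
  assumes "finite V"
  shows "\<exists>k. \<forall>n\<ge>k. \<forall>X\<in>V. \<forall>Y\<in>V. X \<inter> {..<n} = Y \<inter> {..<n} \<longrightarrow> X = Y"
proof -
  define g where "g = (\<lambda>p::nat set \<times> nat set. SOME d. d \<in> (fst p - snd p) \<union> (snd p - fst p))"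
  have "finite (g ` (V \<times> V))" using assms by simp
  then obtain k where k: "g ` (V \<times> V) \<subseteq> {..<k}" using finite_nat_bounded by blast
  show ?thesis
  proof (intro exI allI impI ballI)
    fix n X Y assume n: "k \<le> n" and XY: "X \<in> V" "Y \<in> V" and eq: "X \<inter> {..<n} = Y \<inter> {..<n}"
    show "X = Y"
    proof (rule ccontr)
      assume "X \<noteq> Y"
      then have "\<exists>d. d \<in> (X - Y) \<union> (Y - X)" by blast
      then have gd: "g (X, Y) \<in> (X - Y) \<union> (Y - X)" unfolding g_def fst_conv snd_conv by (rule someI_ex)
      have "g (X, Y) < k" using k XY by blast
      then have "g (X, Y) < n" using n by simp
      then show False using gd eq by blast
    qed
  qed
qed

lemma indep:
  assumes "finite P" "finite Q" "P \<inter> Q = {}"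
  shows "infinite {d \<in> DD. (\<forall>X\<in>P. d \<in> EE X) \<and> (\<forall>Y\<in>Q. d \<notin> EE Y)}"
proof -
  have "finite (P \<union> Q)" using assms by simp
  from restr_sep[OF this] obtain k where k0: "\<forall>n\<ge>k. \<forall>X\<in>P \<union> Q. \<forall>Y\<in>P \<union> Q. X \<inter> {..<n} = Y \<inter> {..<n} \<longrightarrow> X = Y" by blast
  have k: "\<And>n X Y. k \<le> n \<Longrightarrow> X \<in> P \<union> Q \<Longrightarrow> Y \<in> P \<union> Q \<Longrightarrow> X \<inter> {..<n} = Y \<inter> {..<n} \<Longrightarrow> X = Y"
    using k0 by blast
  define s where "s n = (n, (\<lambda>X. X \<inter> {..<n}) ` P)" for n
  have "s ` {k..} \<subseteq> {d \<in> DD. (\<forall>X\<in>P. d \<in> EE X) \<and> (\<forall>Y\<in>Q. d \<notin> EE Y)}"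
  proof
    fix d assume "d \<in> s ` {k..}"
    then obtain n where n: "k \<le> n" "d = s n" by auto
    have sub: "(\<lambda>X. X \<inter> {..<n}) ` P \<subseteq> Pow {..<n}" by blast
    have dD: "d \<in> DD" using sub by (simp add: n s_def DD_def)
    moreover have "\<forall>X\<in>P. d \<in> EE X"
    proof
      fix X assume "X \<in> P"
      then have "X \<inter> {..<n} \<in> (\<lambda>X. X \<inter> {..<n}) ` P" by blast
      then show "d \<in> EE X" using dD by (simp add: n s_def EE_def)
    qed
    moreover have "\<forall>Y\<in>Q. d \<notin> EE Y"
    proof (intro ballI notI)
      fix Y assume Y: "Y \<in> Q" "d \<in> EE Y"
      then have "Y \<inter> {..<n} \<in> (\<lambda>X. X \<inter> {..<n}) ` P" by (simp add: n s_def EE_def)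
      then obtain X where X: "X \<in> P" "Y \<inter> {..<n} = X \<inter> {..<n}" by blast
      then have "Y = X" using k[OF n(1)] Y(1) by blast
      then show False using X(1) Y(1) assms(3) by blast
    qed
    ultimately show "d \<in> {d \<in> DD. (\<forall>X\<in>P. d \<in> EE X) \<and> (\<forall>Y\<in>Q. d \<notin> EE Y)}" by blast
  qed
  moreover have "infinite (s ` {k..})"
  proof -
    have "inj_on s {k..}" unfolding s_def inj_on_def by auto
    then show ?thesis using finite_imageD infinite_Ici by blast
  qed
  ultimately show ?thesis using finite_subset by blast
qed


definition A0 :: "nat set" where "A0 = {p ^ p | p. prime p}"

lemma Npos_iff[simp]: "n \<in> Npos \<longleftrightarrow> 1 \<le> n" by (simp add: Npos_def)

lemma A0_sub: "A0 \<subseteq> Npos"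
proof
  fix a assume "a \<in> A0"
  then obtain p where "prime p" "a = p ^ p" unfolding A0_def by blast
  moreover have "0 < p ^ p" using prime_gt_0_nat[OF \<open>prime p\<close>] by simp
  ultimately show "a \<in> Npos" by simp
qed

lemma A0_infinite: "infinite A0"
proof
  assume fin: "finite A0"
  have "inj_on (\<lambda>p::nat. p ^ p) {p. prime p}"
  proof (rule inj_onI)
    fix p q :: nat assume pq: "p \<in> {p. prime p}" "q \<in> {p. prime p}" "p ^ p = q ^ q"
    have "p dvd q ^ q" using pq(3) pq(1) by (metis dvd_power prime_gt_0_nat mem_Collect_eq)
    then have "p dvd q" using pq(1) prime_dvd_power by auto
    then show "p = q" using pq(1,2) by (simp add: primes_dvd_imp_eq)
  qed
  moreover have "(\<lambda>p::nat. p ^ p) ` {p. prime p} = A0" unfolding A0_def by blast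
  ultimately have "finite {p::nat. prime p}" using fin finite_imageD by metis
  then show False using primes_infinite by blast
qed

lemma A0_divset_finite:
  assumes n: "2 \<le> n"
  shows "finite (divset A0 n)"
proof -
  have "divset A0 n \<subseteq> {..n ^ n}"
  proof
    fix m assume "m \<in> divset A0 n"
    then have m: "1 \<le> m" "m * n \<in> A0" unfolding divset_def by auto
    then obtain p where p: "prime p" "m * n = p ^ p" unfolding A0_def by blast
    obtain q where q: "prime q" "q dvd n" using prime_factor_nat[of n] n by auto
    have "q dvd m * n" using q(2) by simp
    then have "q dvd p ^ p" using p(2) by simp
    then have "q dvd p" using q(1) prime_dvd_power by blast
    then have "q = p" using q(1) p(1) by (simp add: primes_dvd_imp_eq)
    then have "p \<le> n" using q(2) n by (simp add: dvd_imp_le)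
    have "m \<le> m * n" using n by simp
    also have "\<dots> = p ^ p" by (fact p(2))
    also have "\<dots> \<le> n ^ p" using \<open>p \<le> n\<close> by (simp add: power_mono)
    also have "\<dots> \<le> n ^ n" using \<open>p \<le> n\<close> n by (simp add: power_increasing)
    finally show "m \<in> {..n ^ n}" by simp
  qed
  then show ?thesis using finite_subset by blast
qed

lemma A0_L: "A0 \<inter> L i \<subseteq> {i ^ i}"
proof
  fix a assume "a \<in> A0 \<inter> L i"
  then obtain p ps where p: "prime p" "a = p ^ p" and ps: "a = prod_list ps" "length ps = i" "\<forall>q\<in>set ps. prime q"
    unfolding A0_def L_def by blast
  have "ps = replicate i p"
  proof (rule replicate_eqI)
    show "length ps = i" by fact
    fix q assume q: "q \<in> set ps"
    then have "q dvd prod_list ps" by (simp add: prod_list_dvd)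
    then have "q dvd p ^ p" using ps(1) p(2) by simp
    then have "q dvd p" using ps(3) q prime_dvd_power by blast
    then show "q = p" using ps(3) q p(1) by (simp add: primes_dvd_imp_eq)
  qed
  then have "p ^ i = p ^ p" using ps(1) p(2) by simp
  then have "i = p" using p(1) prime_gt_1_nat power_inject_exp by metis
  then show "a \<in> {i ^ i}" using p by simp
qed

lemma A0_L_finite: "finite (A0 \<inter> L i)"
  using A0_L finite_subset by blast

lemma L_sub: "L i \<subseteq> Npos"
proof
  fix a assume "a \<in> L i"
  then obtain ps where ps: "a = prod_list ps" "\<forall>q\<in>set ps. prime q" unfolding L_def by blast
  have "0 \<notin> set ps" using ps(2) by auto
  then have "prod_list ps \<noteq> 0" by (simp add: prod_list_zero_iff)
  then show "a \<in> Npos" using ps(1) by simp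
qed

lemma prod_primes_exists: "1 \<le> (n::nat) \<Longrightarrow> \<exists>ps. prod_list ps = n \<and> (\<forall>q\<in>set ps. prime q)"
proof (induction n rule: less_induct)
  case (less n)
  show ?case
  proof (cases "n = 1")
    case True
    then show ?thesis by (intro exI[of _ "[]"]) simp
  next
    case False
    then obtain p where p: "prime p" "p dvd n" using prime_factor_nat by blast
    then obtain k where k: "n = p * k" by blast
    have "1 \<le> k" using k less.prems by (cases k) auto
    moreover have "k < n" using k p(1) \<open>1 \<le> k\<close> prime_gt_1_nat by (simp add: k)
    ultimately obtain ps where "prod_list ps = k" "\<forall>q\<in>set ps. prime q" using less.IH by blast
    then show ?thesis using p k by (intro exI[of _ "p # ps"]) simp
  qed
qed

lemma L_cover: "(\<Union>i. L i) = Npos"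
proof
  show "(\<Union>i. L i) \<subseteq> Npos" using L_sub by blast
  show "Npos \<subseteq> (\<Union>i. L i)"
  proof
    fix n assume "n \<in> Npos"
    then obtain ps where "prod_list ps = n" "\<forall>q\<in>set ps. prime q" using prod_primes_exists by auto
    then have "n \<in> L (length ps)" unfolding L_def by blast
    then show "n \<in> (\<Union>i. L i)" by blast
  qed
qed


lemma uf_sub: assumes "is_uf U" "A \<in> U" shows "A \<subseteq> Npos"
proof -
  have "\<forall>A\<in>U. A \<subseteq> Npos" using assms(1) unfolding is_uf_def by (elim conjE) assumption
  then show ?thesis using assms(2) by blast
qed

lemma uf_empty: assumes "is_uf U" shows "{} \<notin> U"
  using assms unfolding is_uf_def by (elim conjE) assumption

lemma uf_int: assumes "is_uf U" "A \<in> U" "B \<in> U" shows "A \<inter> B \<in> U"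
proof -
  have "\<forall>A B. A \<in> U \<longrightarrow> B \<in> U \<longrightarrow> A \<inter> B \<in> U" using assms(1) unfolding is_uf_def by (elim conjE) assumption
  then show ?thesis using assms(2,3) by blast
qed

lemma uf_sup: assumes "is_uf U" "A \<in> U" "A \<subseteq> B" "B \<subseteq> Npos" shows "B \<in> U"
proof -
  have "\<forall>A B. A \<in> U \<longrightarrow> A \<subseteq> B \<longrightarrow> B \<subseteq> Npos \<longrightarrow> B \<in> U" using assms(1) unfolding is_uf_def by (elim conjE) assumption
  then show ?thesis using assms(2,3,4) by blast
qed

lemma uf_ultra: assumes "is_uf U" "A \<subseteq> Npos" shows "A \<in> U \<or> Npos - A \<in> U"
proof -
  have "\<forall>A. A \<subseteq> Npos \<longrightarrow> A \<in> U \<or> Npos - A \<in> U" using assms(1) unfolding is_uf_def by (elim conjE) assumption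
  then show ?thesis using assms(2) by blast
qed

lemma uf_finite_principal:
  assumes U: "is_uf U" and fin: "finite F"
  shows "F \<in> U \<Longrightarrow> \<exists>m\<in>F. {m} \<in> U"
  using fin
proof (induction F rule: finite_induct)
  case empty
  then show ?case using uf_empty[OF U] by simp
next
  case (insert a F)
  have sub: "insert a F \<subseteq> Npos" using uf_sub[OF U insert.prems] .
  show ?case
  proof (cases "{a} \<in> U")
    case True
    then show ?thesis by blast
  next
    case False
    then have "Npos - {a} \<in> U" using uf_ultra[OF U, of "{a}"] sub by blast
    then have "insert a F \<inter> (Npos - {a}) \<in> U" using uf_int[OF U insert.prems] by blast
    moreover have "insert a F \<inter> (Npos - {a}) \<subseteq> F" by blast
    ultimately have "F \<in> U" using uf_sup[OF U] sub by blast
    then show ?thesis using insert.IH by blast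
  qed
qed

lemma uf_not_one:
  assumes U: "is_uf U" and ne: "U \<noteq> principal 1"
  shows "{1} \<notin> U"
proof
  assume one: "{1} \<in> U"
  have "U = principal 1"
  proof (rule set_eqI)
    fix A
    show "A \<in> U \<longleftrightarrow> A \<in> principal 1"
    proof
      assume A: "A \<in> U"
      have "1 \<in> A"
      proof (rule ccontr)
        assume "1 \<notin> A"
        then have "A \<inter> {1} = {}" by blast
        then show False using uf_int[OF U A one] uf_empty[OF U] by simp
      qed
      then show "A \<in> principal 1" using uf_sub[OF U A] unfolding principal_def by blast
    next
      assume "A \<in> principal 1"
      then have "A \<subseteq> Npos" "1 \<in> A" unfolding principal_def by auto
      then show "A \<in> U" using uf_sup[OF U one] by blast
    qed
  qed
  then show False using ne by simp
qed

definition good :: "nat set set \<Rightarrow> bool" where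
  "good x \<longleftrightarrow> is_uf x \<and> A0 \<in> x \<and> (\<forall>F\<in>x. infinite F)"

lemma good_notlevel:
  assumes "good x" shows "x \<notin> (\<Union>i. clos (L i))"
proof
  assume "x \<in> (\<Union>i. clos (L i))"
  then obtain i where "L i \<in> x" unfolding clos_def by blast
  then have "A0 \<inter> L i \<in> x" using assms uf_int unfolding good_def by blast
  then show False using assms A0_L_finite unfolding good_def by blast
qed

lemma good_irred:
  assumes g: "good x" shows "beta_irreducible x"
  unfolding beta_irreducible_def
proof (intro conjI notI)
  have X: "is_uf x" and A0x: "A0 \<in> x" and inf: "\<And>F. F \<in> x \<Longrightarrow> infinite F"
    using g unfolding good_def by auto
  show "x \<in> betaN" using X unfolding betaN_def by simp
  assume "\<exists>y\<in>betaN - {principal 1}. \<exists>z\<in>betaN - {principal 1}. x = bmult y z"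
  then obtain y z where Y: "is_uf y" "y \<noteq> principal 1" and Z: "is_uf z" "z \<noteq> principal 1"
    and xyz: "x = bmult y z" unfolding betaN_def by blast
  define B where "B = {n \<in> Npos. divset A0 n \<in> z}"
  have "B \<in> y" using A0x unfolding xyz bmult_def B_def by blast
  moreover have "Npos - {1} \<in> y" using uf_ultra[OF Y(1), of "{1}"] uf_not_one[OF Y] by simp
  ultimately have B'y: "B \<inter> (Npos - {1}) \<in> y" using uf_int[OF Y(1)] by blast
  define B' where "B' = B \<inter> (Npos - {1})"
  have B'y: "B' \<in> y" using B'y unfolding B'_def .
  have B'2: "\<And>n. n \<in> B' \<Longrightarrow> 2 \<le> n \<and> divset A0 n \<in> z" unfolding B'_def B_def by auto
  have "B' \<noteq> {}" using B'y uf_empty[OF Y(1)] by metis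
  then obtain n0 where n0: "n0 \<in> B'" by blast
  then have "divset A0 n0 \<in> z" "finite (divset A0 n0)" using B'2[OF n0] A0_divset_finite by auto
  then obtain m where m: "{m} \<in> z" using uf_finite_principal[OF Z(1)] by blast
  have "m \<noteq> 1" using m uf_not_one[OF Z] by auto
  moreover have "m \<in> Npos" using uf_sub[OF Z(1) m] by simp
  ultimately have m2: "2 \<le> m" by simp
  have mB: "m \<in> divset A0 n" if n: "n \<in> B'" for n
  proof (rule ccontr)
    assume "m \<notin> divset A0 n"
    then have "divset A0 n \<inter> {m} = {}" by blast
    then show False using uf_int[OF Z(1) _ m, of "divset A0 n"] B'2[OF n] uf_empty[OF Z(1)] by simp
  qed
  have "B' \<subseteq> divset A0 m"
  proof
    fix n assume n: "n \<in> B'"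
    then have "m * n \<in> A0" using mB unfolding divset_def by blast
    moreover have "n \<in> Npos" using B'2[OF n] by simp
    ultimately show "n \<in> divset A0 m" unfolding divset_def by (simp add: mult.commute)
  qed
  then have "finite B'" using A0_divset_finite[OF m2] finite_subset by blast
  then obtain n1 where n1: "n1 \<in> B'" "{n1} \<in> y" using uf_finite_principal[OF Y(1)] B'y by blast
  have n11: "1 \<le> n1" using B'2[OF n1(1)] by simp
  have "divset {n1 * m} n1 = {m}"
  proof (rule set_eqI)
    fix k
    have "k * n1 = n1 * m \<longleftrightarrow> k = m" using n11 by (simp add: mult.commute)
    then show "k \<in> divset {n1 * m} n1 \<longleftrightarrow> k \<in> {m}"
      unfolding divset_def using m2 by auto
  qed
  then have "divset {n1 * m} n1 \<in> z" using m by simp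
  then have n1in: "n1 \<in> {k \<in> Npos. divset {n1 * m} k \<in> z}" using n11 by simp
  have sub1: "{n1} \<subseteq> {k \<in> Npos. divset {n1 * m} k \<in> z}" using n1in by simp
  have sub2: "{k \<in> Npos. divset {n1 * m} k \<in> z} \<subseteq> Npos" by (rule subsetI) (erule CollectE, erule conjE, assumption)
  have Sy: "{k \<in> Npos. divset {n1 * m} k \<in> z} \<in> y" by (rule uf_sup[OF Y(1) n1(2) sub1 sub2])
  have "1 \<le> n1 * m" using mult_le_mono[OF n11, of 1 m] m2 by simp
  then have sub3: "{n1 * m} \<subseteq> Npos" by simp
  have "{n1 * m} \<in> x" unfolding xyz bmult_def mem_Collect_eq using sub3 Sy by (rule conjI)
  then show False using inf[of "{n1 * m}"] by simp
qed


definition hh :: "nat \<times> nat set set \<Rightarrow> nat" where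
  "hh = from_nat_into A0 \<circ> to_nat_on DD"

lemma A0_countable: "countable A0" by (rule countable_subset[of _ UNIV]) auto

lemma hh_inj: "inj_on hh DD"
proof -
  have "inj_on (to_nat_on DD) DD" using DD_countable by (rule inj_on_to_nat_on)
  moreover have "inj (from_nat_into A0)"
    using bij_betw_from_nat_into[OF A0_countable A0_infinite] bij_betw_imp_inj_on by blast
  ultimately show ?thesis unfolding hh_def by (simp add: comp_inj_on inj_on_subset)
qed

lemma hh_img: "hh ` DD \<subseteq> A0"
proof -
  have "range (from_nat_into A0) = A0"
    using bij_betw_from_nat_into[OF A0_countable A0_infinite] bij_betw_imp_surj_on by blast
  then show ?thesis unfolding hh_def by auto
qed

lemma hh_Npos: "hh ` DD \<subseteq> Npos" using hh_img A0_sub by blast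

lemma EE_sub: "EE X \<subseteq> DD" unfolding EE_def by auto

definition GG :: "(nat set \<Rightarrow> bool) \<Rightarrow> nat set set" where
  "GG f = (\<lambda>X. hh ` EE X) ` {X. f X} \<union> (\<lambda>X. hh ` (DD - EE X)) ` {X. \<not> f X}
          \<union> (\<lambda>F. Npos - F) ` {F. finite F} \<union> {hh ` DD}"

lemma GG_sub: "GG f \<subseteq> Pow Npos"
  unfolding GG_def using hh_Npos EE_sub by blast

lemma GG_E: "f X \<Longrightarrow> hh ` EE X \<in> GG f"
  unfolding GG_def by (rule UnI1, rule UnI1, rule UnI1, rule imageI, simp)

lemma GG_NE: "\<not> f X \<Longrightarrow> hh ` (DD - EE X) \<in> GG f"
  unfolding GG_def by (rule UnI1, rule UnI1, rule UnI2, rule imageI, simp)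

lemma GG_F: "finite F \<Longrightarrow> Npos - F \<in> GG f"
  unfolding GG_def by (rule UnI1, rule UnI2, rule imageI, simp)

lemma GG_D: "hh ` DD \<in> GG f"
  unfolding GG_def by (rule UnI2, simp)

lemma fsi:
  assumes "finite (H \<inter> g ` A)"
  obtains C where "C \<subseteq> A" "finite C" "H \<inter> g ` A = g ` C"
proof -
  have "H \<inter> g ` A \<subseteq> g ` A" by (rule Int_lower2)
  from finite_subset_image[OF assms this] obtain C where "C \<subseteq> A \<and> finite C \<and> H \<inter> g ` A = g ` C" by (elim exE)
  then show ?thesis using that by (elim conjE)
qed

lemma GG_fip: "fip (GG f)"
  unfolding fip_def
proof (intro allI impI)
  fix H assume H: "finite H \<and> H \<subseteq> GG f"
  have finH: "finite H" using H by (rule conjunct1)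
  have "finite (H \<inter> (\<lambda>X. hh ` EE X) ` {X. f X})" using finH by (rule finite_Int[OF disjI1])
  then obtain P where P: "P \<subseteq> {X. f X}" "finite P" "H \<inter> (\<lambda>X. hh ` EE X) ` {X. f X} = (\<lambda>X. hh ` EE X) ` P"
    by (rule fsi)
  have "finite (H \<inter> (\<lambda>X. hh ` (DD - EE X)) ` {X. \<not> f X})" using finH by (rule finite_Int[OF disjI1])
  then obtain Q where Q: "Q \<subseteq> {X. \<not> f X}" "finite Q" "H \<inter> (\<lambda>X. hh ` (DD - EE X)) ` {X. \<not> f X} = (\<lambda>X. hh ` (DD - EE X)) ` Q"
    by (rule fsi)
  have "finite (H \<inter> (\<lambda>F. Npos - F) ` {F. finite F})" using finH by (rule finite_Int[OF disjI1])
  then obtain Fs where Fs: "Fs \<subseteq> {F. finite F}" "finite Fs" "H \<inter> (\<lambda>F. Npos - F) ` {F. finite F} = (\<lambda>F. Npos - F) ` Fs"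
    by (rule fsi)
  define I where "I = {d \<in> DD. (\<forall>X\<in>P. d \<in> EE X) \<and> (\<forall>Y\<in>Q. d \<notin> EE Y)}"
  have PQ: "P \<inter> Q = {}" using P(1) Q(1) by blast
  have infI: "infinite I" unfolding I_def by (rule indep[OF P(2) Q(2) PQ])
  have IDD: "I \<subseteq> DD" unfolding I_def by (rule subsetI) (erule CollectE, erule conjE)
  have "inj_on hh I" using hh_inj IDD by (rule inj_on_subset)
  then have inf2: "infinite (hh ` I)" using infI finite_imageD by blast
  have finU: "finite (\<Union>Fs)"
  proof (rule finite_Union)
    show "finite Fs" by (rule Fs(2))
    show "\<And>M. M \<in> Fs \<Longrightarrow> finite M" using Fs(1) by blast
  qed
  have "\<not> hh ` I \<subseteq> \<Union>Fs"
  proof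
    assume "hh ` I \<subseteq> \<Union>Fs"
    then have "finite (hh ` I)" using finU by (rule finite_subset)
    then show False using inf2 by contradiction
  qed
  then obtain z where z: "z \<in> hh ` I" "z \<notin> \<Union>Fs" by blast
  then obtain d where d: "d \<in> I" "z = hh d" by blast
  have dD: "d \<in> DD" and dP: "\<And>X. X \<in> P \<Longrightarrow> d \<in> EE X" and dQ: "\<And>Y. Y \<in> Q \<Longrightarrow> d \<notin> EE Y"
    using d(1) unfolding I_def by auto
  have zN: "z \<in> Npos" using hh_Npos dD d(2) by blast
  have "z \<in> S" if S: "S \<in> H" for S
  proof -
    have "S \<in> GG f" using S H by blast
    then have "S \<in> (\<lambda>X. hh ` EE X) ` {X. f X} \<or> S \<in> (\<lambda>X. hh ` (DD - EE X)) ` {X. \<not> f X}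
      \<or> S \<in> (\<lambda>F. Npos - F) ` {F. finite F} \<or> S = hh ` DD" unfolding GG_def by (elim UnE) simp_all
    then consider (a) "S \<in> (\<lambda>X. hh ` EE X) ` {X. f X}" | (b) "S \<in> (\<lambda>X. hh ` (DD - EE X)) ` {X. \<not> f X}"
      | (c) "S \<in> (\<lambda>F. Npos - F) ` {F. finite F}" | (e) "S = hh ` DD" by argo
    then show ?thesis
    proof cases
      case a
      then have "S \<in> H \<inter> (\<lambda>X. hh ` EE X) ` {X. f X}" using S by (rule IntI[rotated])
      then have "S \<in> (\<lambda>X. hh ` EE X) ` P" using P(3) by simp
      then obtain X where X: "X \<in> P" "S = hh ` EE X" by (rule imageE)
      have "d \<in> EE X" using dP[OF X(1)] .
      then have "hh d \<in> hh ` EE X" by (rule imageI)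
      then show ?thesis using X(2) d(2) by simp
    next
      case b
      then have "S \<in> H \<inter> (\<lambda>X. hh ` (DD - EE X)) ` {X. \<not> f X}" using S by (rule IntI[rotated])
      then have "S \<in> (\<lambda>X. hh ` (DD - EE X)) ` Q" using Q(3) by simp
      then obtain X where X: "X \<in> Q" "S = hh ` (DD - EE X)" by (rule imageE)
      have "d \<in> DD - EE X" using dQ[OF X(1)] dD by (rule DiffI[rotated])
      then have "hh d \<in> hh ` (DD - EE X)" by (rule imageI)
      then show ?thesis using X(2) d(2) by simp
    next
      case c
      then have "S \<in> H \<inter> (\<lambda>F. Npos - F) ` {F. finite F}" using S by (rule IntI[rotated])
      then have "S \<in> (\<lambda>F. Npos - F) ` Fs" using Fs(3) by simp
      then obtain F where F: "F \<in> Fs" "S = Npos - F" by (rule imageE)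
      have "z \<notin> F" using z(2) F(1) by blast
      then show ?thesis using F(2) zN by simp
    next
      case e
      have "hh d \<in> hh ` DD" using dD by (rule imageI)
      then show ?thesis using e d(2) by simp
    qed
  qed
  then have "z \<in> Npos \<inter> \<Inter>H" using zN by blast
  then show "Npos \<inter> \<Inter>H \<noteq> {}" by blast
qed

definition Phi :: "(nat set \<Rightarrow> bool) \<Rightarrow> nat set set" where
  "Phi f = (SOME U. is_uf U \<and> GG f \<subseteq> U)"

lemma Phi_prop: "is_uf (Phi f) \<and> GG f \<subseteq> Phi f"
  unfolding Phi_def using uf_exists[OF GG_sub GG_fip] by (rule someI_ex)

lemma Phi_good: "good (Phi f)"
  unfolding good_def
proof (intro conjI ballI)
  have U: "is_uf (Phi f)" and G: "GG f \<subseteq> Phi f" using Phi_prop by auto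
  show "is_uf (Phi f)" by fact
  have "hh ` DD \<in> Phi f" using G GG_D by blast
  then show "A0 \<in> Phi f" using uf_sup[OF U] hh_img A0_sub by blast
  fix F assume F: "F \<in> Phi f"
  show "infinite F"
  proof
    assume "finite F"
    then have "Npos - F \<in> Phi f" using G GG_F by blast
    then have "F \<inter> (Npos - F) \<in> Phi f" using uf_int[OF U F] by blast
    then show False using uf_empty[OF U] by simp
  qed
qed

lemma Phi_sep: assumes "f X" "\<not> g X" shows "Phi f \<noteq> Phi g"
proof
  assume eq: "Phi f = Phi g"
  have U: "is_uf (Phi f)" using Phi_prop by auto
  have "hh ` EE X \<in> Phi f" using Phi_prop GG_E[of f X, OF assms(1)] by blast
  moreover have "hh ` (DD - EE X) \<in> Phi f" using Phi_prop[of g] GG_NE[of g X, OF assms(2)] eq by auto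
  ultimately have "hh ` EE X \<inter> hh ` (DD - EE X) \<in> Phi f" using uf_int[OF U] by blast
  moreover have "hh ` EE X \<inter> hh ` (DD - EE X) = {}"
  proof (rule ccontr)
    assume "hh ` EE X \<inter> hh ` (DD - EE X) \<noteq> {}"
    then obtain d1 d2 where d: "d1 \<in> EE X" "d2 \<in> DD" "d2 \<notin> EE X" "hh d1 = hh d2" by blast
    have "d1 \<in> DD" using d(1) EE_sub by blast
    then have "d1 = d2" using inj_onD[OF hh_inj d(4)] d(2) by blast
    then show False using d by blast
  qed
  ultimately show False using uf_empty[OF U] by simp
qed

definition Psi :: "nat set set \<Rightarrow> nat set set" where
  "Psi A = Phi (\<lambda>X. X \<in> A)"

lemma Psi_inj: "inj Psi"
proof (rule injI)
  fix A B assume eq: "Psi A = Psi B"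
  show "A = B"
  proof (rule ccontr)
    assume "A \<noteq> B"
    then obtain X where "X \<in> A \<and> X \<notin> B \<or> X \<in> B \<and> X \<notin> A" by blast
    then show False using Phi_sep[of "\<lambda>X. X \<in> A" X "\<lambda>X. X \<in> B"] Phi_sep[of "\<lambda>X. X \<in> B" X "\<lambda>X. X \<in> A"] eq
      unfolding Psi_def by auto
  qed
qed

theorem lemma3p1:
  shows "({x \<in> betaN. x \<notin> (\<Union>i. clos (L i))} \<approx> Pow (UNIV :: real set))
       \<and> ({x \<in> betaN. beta_irreducible x \<and> x \<notin> (\<Union>i. clos (L i))} \<approx> Pow (UNIV :: real set))
       \<and> ((\<Union>i. clos (L i)) \<noteq> clos (\<Union>i. L i))"
proof -
  define S1 where "S1 = {x \<in> betaN. x \<notin> (\<Union>i. clos (L i))}"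
  define S2 where "S2 = {x \<in> betaN. beta_irreducible x \<and> x \<notin> (\<Union>i. clos (L i))}"
  have PsiS2: "Psi ` UNIV \<subseteq> S2"
  proof
    fix x assume "x \<in> Psi ` UNIV"
    then obtain A where "x = Psi A" by blast
    then have g: "good x" unfolding Psi_def using Phi_good by simp
    then have "x \<in> betaN" unfolding good_def betaN_def by simp
    then show "x \<in> S2" unfolding S2_def using g good_irred good_notlevel by blast
  qed
  have S21: "S2 \<subseteq> S1" unfolding S1_def S2_def by blast
  obtain b where b: "bij_betw b (UNIV :: nat set set) (UNIV :: real set)"
    using nat_sets_eqpoll_reals unfolding eqpoll_def by blast
  have "bij_betw (image b) (Pow (UNIV :: nat set set)) (Pow (UNIV :: real set))"
    using bij_betw_Pow[OF b] .
  then have U_eq: "(UNIV :: nat set set set) \<approx> Pow (UNIV :: real set)"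
    unfolding eqpoll_def by (metis Pow_UNIV)
  have low: "(UNIV :: nat set set set) \<lesssim> S2"
    unfolding lepoll_def using Psi_inj PsiS2 by blast
  have up1: "S1 \<lesssim> Pow (UNIV :: real set)"
    using lepoll_trans2[OF subset_imp_lepoll[of S1 UNIV] U_eq] by simp
  have low2: "Pow (UNIV :: real set) \<lesssim> S2"
    using lepoll_trans1[OF eqpoll_sym[OF U_eq] low] .
  have e1: "S1 \<approx> Pow (UNIV :: real set)"
    using lepoll_antisym[OF up1 lepoll_trans[OF low2 subset_imp_lepoll[OF S21]]] .
  have e2: "S2 \<approx> Pow (UNIV :: real set)"
    using lepoll_antisym[OF lepoll_trans[OF subset_imp_lepoll[OF S21] up1] low2] .
  have "Psi {} \<in> S1" using PsiS2 S21 by blast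
  then have "Psi {} \<in> betaN" "Psi {} \<notin> (\<Union>i. clos (L i))" unfolding S1_def by auto
  moreover have "Psi {} \<in> clos (\<Union>i. L i)"
  proof -
    have "is_uf (Psi {})" using \<open>Psi {} \<in> betaN\<close> unfolding betaN_def by simp
    then have "Npos \<in> Psi {}" unfolding is_uf_def by (elim conjE) assumption
    then show ?thesis using \<open>Psi {} \<in> betaN\<close> unfolding clos_def L_cover by blast
  qed
  ultimately have "(\<Union>i. clos (L i)) \<noteq> clos (\<Union>i. L i)" by blast
  then show ?thesis using e1 e2 unfolding S1_def S2_def by blast
qed

end
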